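(* Let $\mathsf{K}$ be a field, $m$ a positive integer and $\alpha \in \mathsf{K}$ a primitive $m$-th root of unity. Let $f \in \mathsf{K}[z]$ be a polynomial with at most $t$ nonzero terms and $\deg f < m$, and let $a_i = f(\alpha^i)$ for $i \ge 0$. Let $r \ge 0$, $s > 0$ and $k$ be integers with $\gcd(s,m)=1$ and $k \ge 2t$. Then $f$ is determined by the affine sub-sequence $(a_r, a_{r+s}, a_{r+2s}, \dots, a_{r+(k-1)s})$: if $g \in \mathsf{K}[z]$ has at most $t$ nonzero terms, $\deg g < m$, and $g(\alpha^{r+is}) = a_{r+is}$ for all $0 \le i \le k-1$, then $g = f$. *)

theory Defs
  imports "HOL-Computational_Algebra.Polynomial"
begin

definition primitive_root_of_unity :: "nat \<Rightarrow> 'a::field \<Rightarrow> bool" where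
  "primitive_root_of_unity m \<alpha> \<longleftrightarrow> 0 < m \<and> \<alpha> ^ m = 1 \<and> (\<forall>j. 0 < j \<and> j < m \<longrightarrow> \<alpha> ^ j \<noteq> 1)"

definition num_terms :: "'a::zero poly \<Rightarrow> nat" where
  "num_terms p = card {i. coeff p i \<noteq> 0}"

end

theory Submission
  imports Defs
begin

lemma vander:
  fixes d \<beta> :: "nat \<Rightarrow> 'a::field"
  assumes fin: "finite S" and ck: "card S \<le> k" and inj: "inj_on \<beta> S"
    and z: "\<And>i. i < k \<Longrightarrow> (\<Sum>j\<in>S. d j * \<beta> j ^ i) = 0" and j0: "j0 \<in> S"
  shows "d j0 = 0"
proof -
  define P where "P = (\<Prod>j\<in>S-{j0}. [:-\<beta> j, 1:])"
  have "degree P \<le> (\<Sum>j\<in>S-{j0}. degree [:-\<beta> j, 1:])"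
    unfolding P_def using degree_prod_sum_le[of "S-{j0}" "\<lambda>j. [:-\<beta> j, 1:]"] fin by (simp add: o_def)
  also have "\<dots> = card (S - {j0})" by simp
  also have "\<dots> < k" using ck card_Diff1_less[OF fin j0] by linarith
  finally have degP: "degree P < k" .
  have "(\<Sum>j\<in>S. d j * poly P (\<beta> j)) = (\<Sum>j\<in>S. \<Sum>i\<le>degree P. coeff P i * (d j * \<beta> j ^ i))"
    by (simp add: poly_altdef sum_distrib_left mult_ac)
  also have "\<dots> = (\<Sum>i\<le>degree P. coeff P i * (\<Sum>j\<in>S. d j * \<beta> j ^ i))"
    by (simp add: sum.swap[of _ S] sum_distrib_left)
  also have "\<dots> = 0" using degP z by simp
  finally have s0: "(\<Sum>j\<in>S. d j * poly P (\<beta> j)) = 0" .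
  have "(\<Sum>j\<in>S. d j * poly P (\<beta> j)) = d j0 * poly P (\<beta> j0) + (\<Sum>j\<in>S-{j0}. d j * poly P (\<beta> j))"
    using fin j0 by (simp add: sum.remove)
  also have "(\<Sum>j\<in>S-{j0}. d j * poly P (\<beta> j)) = 0"
  proof (rule sum.neutral, rule ballI)
    fix j assume j: "j \<in> S - {j0}"
    have "poly P (\<beta> j) = (\<Prod>l\<in>S-{j0}. \<beta> j - \<beta> l)" unfolding P_def by (simp add: poly_prod)
    also have "\<dots> = 0" using j fin by (intro prod_zero) auto
    finally show "d j * poly P (\<beta> j) = 0" by simp
  qed
  finally have "d j0 * poly P (\<beta> j0) = 0" using s0 by simp
  moreover have "poly P (\<beta> j0) \<noteq> 0"
  proof -
    have "poly P (\<beta> j0) = (\<Prod>l\<in>S-{j0}. \<beta> j0 - \<beta> l)" unfolding P_def by (simp add: poly_prod)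
    also have "\<dots> \<noteq> 0" using fin inj j0 by (auto simp: inj_on_def)
    finally show ?thesis .
  qed
  ultimately show ?thesis by simp
qed

lemma pow_inj:
  fixes \<alpha> :: "'a::field"
  assumes pr: "primitive_root_of_unity m \<alpha>" and cop: "coprime s m"
    and a: "a < m" and b: "b < m" and ab: "a \<le> b" and eq: "\<alpha> ^ (a*s) = \<alpha> ^ (b*s)"
  shows "a = b"
proof -
  have m: "0 < m" "\<alpha> ^ m = 1" and prim: "\<And>j. 0 < j \<Longrightarrow> j < m \<Longrightarrow> \<alpha> ^ j \<noteq> 1"
    using pr unfolding primitive_root_of_unity_def by auto
  have a0: "\<alpha> \<noteq> 0"
  proof
    assume "\<alpha> = 0" with m show False by (simp add: power_0_left)
  qed
  have "b*s = a*s + (b-a)*s" using ab by (simp add: algebra_simps)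
  hence "\<alpha> ^ (b*s) = \<alpha>^(a*s) * \<alpha>^((b-a)*s)" by (simp add: power_add)
  hence one: "\<alpha>^((b-a)*s) = 1" using eq a0 by simp
  have "(b-a)*s = m * ((b-a)*s div m) + (b-a)*s mod m" by simp
  hence "\<alpha>^((b-a)*s) = (\<alpha>^m)^((b-a)*s div m) * \<alpha>^((b-a)*s mod m)"
    by (metis power_add power_mult)
  hence "\<alpha>^((b-a)*s mod m) = 1" using one m by simp
  hence "(b-a)*s mod m = 0" using prim m(1) by (meson mod_less_divisor neq0_conv)
  hence "m dvd (b-a)*s" by auto
  hence "m dvd (b-a)" using cop by (metis coprime_commute coprime_dvd_mult_left_iff)
  moreover have "b - a < m" using b by simp
  ultimately have "b - a = 0" by (metis dvd_imp_le neq0_conv not_le)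
  thus ?thesis using ab by simp
qed

theorem lemma1:
  fixes \<alpha> :: "'a::field" and f g :: "'a poly" and m t r s k :: nat and a :: "nat \<Rightarrow> 'a"
  assumes "0 < m"
    and "primitive_root_of_unity m \<alpha>"
    and "num_terms f \<le> t" and "degree f < m"
    and "\<And>i. a i = poly f (\<alpha> ^ i)"
    and "0 < s" and "gcd s m = 1" and "k \<ge> 2 * t"
    and "num_terms g \<le> t" and "degree g < m"
    and "\<And>i. i < k \<Longrightarrow> poly g (\<alpha> ^ (r + i * s)) = a (r + i * s)"
  shows "g = f"
proof -
  define h where "h = g - f"
  define S where "S = {i. coeff h i \<noteq> 0}"
  have a0: "\<alpha> \<noteq> 0"
  proof
    assume "\<alpha> = 0"
    moreover have "\<alpha> ^ m = 1" using assms(2) by (simp add: primitive_root_of_unity_def)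
    ultimately show False using assms(1) by (simp add: power_0_left)
  qed
  have finF: "finite {i. coeff f i \<noteq> 0}" "finite {i. coeff g i \<noteq> 0}"
    by (metis MOST_coeff_eq_0 eventually_cofinite)+
  have Ssub: "S \<subseteq> {i. coeff g i \<noteq> 0} \<union> {i. coeff f i \<noteq> 0}"
    unfolding S_def h_def by auto
  have finS: "finite S" using Ssub finF finite_subset by blast
  have "card S \<le> card ({i. coeff g i \<noteq> 0} \<union> {i. coeff f i \<noteq> 0})"
    using Ssub finF by (intro card_mono) auto
  also have "\<dots> \<le> num_terms g + num_terms f" unfolding num_terms_def by (rule card_Un_le)
  finally have cS: "card S \<le> k" using assms by simp
  have Sm: "S \<subseteq> {..<m}"
  proof
    fix i assume "i \<in> S"
    hence "coeff h i \<noteq> 0" by (simp add: S_def)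
    hence "i \<le> degree h" by (meson le_degree)
    moreover have "degree h < m" unfolding h_def using assms(4,10)
      using degree_diff_le_max[of g f] by linarith
    ultimately show "i \<in> {..<m}" by simp
  qed
  have polyh: "poly h x = (\<Sum>j\<in>S. coeff h j * x ^ j)" for x
  proof -
    have "poly h x = (\<Sum>j\<le>degree h. coeff h j * x ^ j)" by (simp add: poly_altdef)
    also have "\<dots> = (\<Sum>j\<in>S. coeff h j * x ^ j)"
      by (rule sum.mono_neutral_right) (auto simp: S_def le_degree)
    finally show ?thesis .
  qed
  have z: "(\<Sum>j\<in>S. (coeff h j * \<alpha> ^ (j*r)) * (\<alpha> ^ (j*s)) ^ i) = 0" if i: "i < k" for i
  proof -
    have "poly h (\<alpha> ^ (r + i * s)) = 0" using assms(5) assms(11)[OF i] by (simp add: h_def)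
    moreover have "poly h (\<alpha> ^ (r + i * s)) = (\<Sum>j\<in>S. (coeff h j * \<alpha> ^ (j*r)) * (\<alpha> ^ (j*s)) ^ i)"
      unfolding polyh
      by (rule sum.cong) (auto simp: power_mult[symmetric] power_add[symmetric] algebra_simps)
    ultimately show ?thesis by simp
  qed
  have cop: "coprime s m" using assms(7) by (simp add: coprime_iff_gcd_eq_1)
  have inj: "inj_on (\<lambda>j. \<alpha> ^ (j*s)) S"
  proof (rule inj_onI)
    fix x y assume x: "x \<in> S" and y: "y \<in> S" and e: "\<alpha> ^ (x*s) = \<alpha> ^ (y*s)"
    show "x = y"
    proof (cases "x \<le> y")
      case True thus ?thesis using pow_inj[OF assms(2) cop _ _ True e] x y Sm by auto
    next
      case False thus ?thesis using pow_inj[OF assms(2) cop _ _ _ e[symmetric]] x y Sm by auto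
    qed
  qed
  have "S = {}"
  proof (rule ccontr)
    assume "S \<noteq> {}"
    then obtain j where j: "j \<in> S" by auto
    have "coeff h j * \<alpha> ^ (j*r) = 0"
      using vander[OF finS cS inj, of "\<lambda>j. coeff h j * \<alpha> ^ (j*r)", OF z j] by simp
    thus False using j a0 by (simp add: S_def)
  qed
  hence "h = 0" by (auto simp: S_def poly_eq_iff)
  thus ?thesis by (simp add: h_def)
qed

end
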